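(* Let $\Sigma$ be a compact oriented surface with boundary components $\gamma_1,\dots,\gamma_n$ and $\chi(\Sigma)<0$, with a hyperbolic metric $d$ with geodesic boundary, a weight $\mathbf{r}\in\mathbb{R}^n_{>0}$ and a truncated triangulation $\mathcal{T}$. For a truncated hinge $\Diamond_{ij;kl}$ (edge $e_{ij}$ with faces $f_{ijk},f_{ijl}$), put $p=r_k,q=r_i,r=r_l,s=r_j$ and $a=\cosh l_{ki}$, $b=\cosh l_{il}$, $c=\cosh l_{lj}$, $d=\cosh l_{jk}$, $e=\cosh l_{ij}$, where $l_{\alpha\beta}$ is the length coordinate of $[d]$ at $e_{\alpha\beta}$. Then $e_{ij}$ is local weighted Delaunay if and only if \[\frac{\sqrt{\Delta_{bce}}}{p}+\frac{\sqrt{\Delta_{ade}}}{r}\le\frac{\sqrt{\Delta_{cdf}}}{q}+\frac{\sqrt{\Delta_{abf}}}{s},\] where $\Delta_{xyz}=x^2+y^2+z^2+2xyz-1$ and $f=\frac{ab+cd+ace+bde+\sqrt{\Delta_{ade}}\sqrt{\Delta_{bce}}}{e^2-1}$.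
   Context: Gluing open disks $D_i$ to the boundary components $\gamma_i$ and choosing $v_i\in D_i$ gives a marked surface $(S,V)$; a truncated triangulation of $\Sigma$ is the intersection with $\Sigma$ of a triangulation of $(S,V)$ (a $\Delta$-complex decomposition with $0$-cells $V$); each face becomes a truncated triangle (right-angled hexagon after straightening). For each edge, the truncated arc is isotopic to a unique geodesic orthogonal to $\partial\Sigma$, whose length is the length coordinate. For a truncated face $f_{ijk}$, lifted to $\mathbb{H}^2$, $O_{ijk}$ denotes the point satisfying $r_i\sinh d(O_{ijk},\gamma_i)=r_j\sinh d(O_{ijk},\gamma_j)=r_k\sinh d(O_{ijk},\gamma_k)$, and $h_{ij,k}$ is the hyperbolic distance from $O_{ijk}$ to the geodesic edge $e_{ij}$, positive if $O_{ijk}$ lies on the same side of $e_{ij}$ as $f_{ijk}$ and negative otherwise. The edge $e_{ij}$ is local weighted Delaunay if $h_{ij,k}+h_{ij,l}\ge0$. *)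

theory Defs
  imports "HOL-Analysis.Analysis"
begin

text \<open>Hyperboloid model of the hyperbolic plane in Minkowski space R^{2,1}.\<close>

definition mink :: "real^3 \<Rightarrow> real^3 \<Rightarrow> real" where
  "mink x y = x$1 * y$1 + x$2 * y$2 - x$3 * y$3"

definition hyp_plane :: "(real^3) set" where
  "hyp_plane = {x. mink x x = -1 \<and> x$3 > 0}"

definition hdist :: "real^3 \<Rightarrow> real^3 \<Rightarrow> real" where
  "hdist x y = arcosh (- mink x y)"

definition pt_set_dist :: "real^3 \<Rightarrow> (real^3) set \<Rightarrow> real" where
  "pt_set_dist x A = Inf (hdist x ` A)"

definition set_dist :: "(real^3) set \<Rightarrow> (real^3) set \<Rightarrow> real" where
  "set_dist A B = Inf {hdist x y | x y. x \<in> A \<and> y \<in> B}"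

text \<open>A geodesic is given by a unit spacelike normal n; the two open sides
  of it are the open half-planes where mink x n is positive resp. negative.\<close>
definition spacelike_unit :: "real^3 \<Rightarrow> bool" where
  "spacelike_unit n \<longleftrightarrow> mink n n = 1"

definition geod :: "real^3 \<Rightarrow> (real^3) set" where
  "geod n = {x \<in> hyp_plane. mink x n = 0}"

definition half_plane :: "real^3 \<Rightarrow> (real^3) set" where
  "half_plane n = {x \<in> hyp_plane. mink x n > 0}"

definition signed_dist :: "real^3 \<Rightarrow> real^3 \<Rightarrow> real" where
  "signed_dist x n = (if mink x n \<ge> 0 then pt_set_dist x (geod n) else - pt_set_dist x (geod n))"

text \<open>Three boundary geodesics (unit normals pointing into the face) bounding a
  truncated triangle: pairwise disjoint (ultraparallel), none separating the
  other two, the normals pointing to the common region.\<close>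
definition truncated_triangle :: "real^3 \<Rightarrow> real^3 \<Rightarrow> real^3 \<Rightarrow> bool" where
  "truncated_triangle a b c \<longleftrightarrow>
     spacelike_unit a \<and> spacelike_unit b \<and> spacelike_unit c \<and>
     mink a b < -1 \<and> mink b c < -1 \<and> mink a c < -1 \<and>
     half_plane a \<inter> half_plane b \<inter> half_plane c \<noteq> {}"

definition is_face_centre ::
  "real^3 \<Rightarrow> real^3 \<Rightarrow> real^3 \<Rightarrow> real \<Rightarrow> real \<Rightarrow> real \<Rightarrow> real^3 \<Rightarrow> bool" where
  "is_face_centre na nb nc wa wb wc z \<longleftrightarrow>
     z \<in> hyp_plane \<and> mink z na \<ge> 0 \<and> mink z nb \<ge> 0 \<and> mink z nc \<ge> 0 \<and>
     wa * sinh (pt_set_dist z (geod na)) = wb * sinh (pt_set_dist z (geod nb)) \<and>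
     wb * sinh (pt_set_dist z (geod nb)) = wc * sinh (pt_set_dist z (geod nc))"

definition Delta :: "real \<Rightarrow> real \<Rightarrow> real \<Rightarrow> real" where
  "Delta x y z = x^2 + y^2 + z^2 + 2*x*y*z - 1"

end

theory Submission
  imports Defs
begin


lemma mink_comm: "mink x y = mink y x"
  by (simp add: mink_def algebra_simps)
lemma mink_add_left: "mink (x + y) z = mink x z + mink y z"
  by (simp add: mink_def algebra_simps)
lemma mink_add_right: "mink z (x + y) = mink z x + mink z y"
  by (simp add: mink_def algebra_simps)
lemma mink_diff_left: "mink (x - y) z = mink x z - mink y z"
  by (simp add: mink_def algebra_simps)
lemma mink_diff_right: "mink z (x - y) = mink z x - mink z y"
  by (simp add: mink_def algebra_simps)
lemma mink_scale_left: "mink (c *\<^sub>R x) z = c * mink x z"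
  by (simp add: mink_def algebra_simps)
lemma mink_scale_right: "mink z (c *\<^sub>R x) = c * mink z x"
  by (simp add: mink_def algebra_simps)
lemma mink_minus_left: "mink (- x) z = - mink x z"
  by (simp add: mink_def algebra_simps)
lemma mink_minus_right: "mink z (- x) = - mink z x"
  by (simp add: mink_def algebra_simps)

lemmas mink_simps = mink_add_left mink_add_right mink_diff_left mink_diff_right
  mink_scale_left mink_scale_right mink_minus_left mink_minus_right

lemma rev_cs:
  assumes "mink x x < 0"
  shows "(mink x y)^2 \<ge> mink x x * mink y y"
proof -
  have x3: "x$3 \<noteq> 0"
  proof
    assume "x$3 = 0"
    hence "mink x x = (x$1)^2 + (x$2)^2" by (simp add: mink_def power2_eq_square)
    thus False using assms by (smt (verit) zero_le_power2)
  qed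
  define l where "l = - y$3 / x$3"
  define v where "v = y + l *\<^sub>R x"
  have "v$3 = 0" using x3 by (simp add: v_def l_def field_simps)
  hence "mink v v = (v$1)^2 + (v$2)^2" by (simp add: mink_def power2_eq_square)
  hence v0: "mink v v \<ge> 0" by simp
  have vv: "mink v v = mink y y + 2 * l * mink x y + l^2 * mink x x"
    by (simp add: v_def mink_simps mink_comm[of y x] power2_eq_square algebra_simps)
  have "mink x x * mink v v \<le> 0" using v0 assms by (simp add: mult_nonpos_nonneg)
  hence "(mink x x * l + mink x y)^2 - ((mink x y)^2 - mink x x * mink y y) \<le> 0"
    unfolding vv by (simp add: power2_eq_square algebra_simps)
  moreover have "(mink x x * l + mink x y)^2 \<ge> 0" by simp
  ultimately show ?thesis by linarith
qed

lemma core_ineq: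
  fixes x1 x2 x3 y1 y2 y3 :: real
  assumes "x1^2 + x2^2 < x3^2" "y1^2 + y2^2 < y3^2" "x3 > 0" "y3 > 0"
  shows "x1*y1 + x2*y2 < x3*y3"
proof -
  have cs: "(x1*y1 + x2*y2)^2 \<le> (x1^2 + x2^2) * (y1^2 + y2^2)"
  proof -
    have "(x1^2 + x2^2) * (y1^2 + y2^2) - (x1*y1 + x2*y2)^2 = (x1*y2 - x2*y1)^2"
      by (simp add: power2_eq_square algebra_simps)
    thus ?thesis by (smt (verit) zero_le_power2)
  qed
  have "(x1^2 + x2^2) * (y1^2 + y2^2) \<le> x3^2 * (y1^2 + y2^2)"
    using assms(1) by (intro mult_right_mono) auto
  also have "\<dots> < x3^2 * y3^2" using assms by (intro mult_strict_left_mono) auto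
  finally have "(x1*y1 + x2*y2)^2 < (x3*y3)^2" using cs by (simp add: power_mult_distrib)
  thus ?thesis using assms(3,4)
    by (smt (verit) mult_pos_pos power2_le_imp_le)
qed

lemma timelike_comp: "mink x x < 0 \<Longrightarrow> (x$1)^2 + (x$2)^2 < (x$3)^2"
  by (simp add: mink_def power2_eq_square)

lemma future_neg:
  assumes "mink x x < 0" "x$3 > 0" "mink y y < 0" "y$3 > 0"
  shows "mink x y < 0"
  using core_ineq[OF timelike_comp[OF assms(1)] timelike_comp[OF assms(3)] assms(2,4)]
  by (simp add: mink_def)

lemma same_cone:
  assumes "mink x x < 0" "x$3 > 0" "mink y y < 0" "mink x y < 0"
  shows "y$3 > 0"
proof (rule ccontr)
  assume "\<not> y$3 > 0"
  moreover have "y$3 \<noteq> 0"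
  proof
    assume "y$3 = 0"
    hence "mink y y = (y$1)^2 + (y$2)^2" by (simp add: mink_def power2_eq_square)
    thus False using assms(3) by (smt (verit) zero_le_power2)
  qed
  ultimately have "(-y)$3 > 0" by simp
  moreover have "mink (-y) (-y) < 0" using assms(3) by (simp add: mink_simps)
  ultimately have "mink x (-y) < 0" using future_neg assms(1,2) by blast
  thus False using assms(4) by (simp add: mink_simps)
qed

lemma hyp_planeD: "x \<in> hyp_plane \<Longrightarrow> mink x x = -1 \<and> x$3 > 0"
  by (simp add: hyp_plane_def)

lemma hyp_neg: "x \<in> hyp_plane \<Longrightarrow> y \<in> hyp_plane \<Longrightarrow> mink x y < 0"
  using future_neg hyp_planeD by (metis neg_less_0_iff_less zero_less_one)




definition proj :: "real^3 \<Rightarrow> real^3 \<Rightarrow> real^3" where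
  "proj n z = (1 / sqrt (1 + (mink z n)^2)) *\<^sub>R (z - mink z n *\<^sub>R n)"

lemma proj_mink:
  assumes "spacelike_unit n"
  shows "mink (proj n z) v = (mink z v - mink z n * mink n v) / sqrt (1 + (mink z n)^2)"
  by (simp add: proj_def mink_simps)

lemma proj_in_geod:
  assumes z: "z \<in> hyp_plane" and n: "spacelike_unit n"
  shows "proj n z \<in> geod n"
proof -
  define c where "c = mink z n"
  have nn: "mink n n = 1" using n by (simp add: spacelike_unit_def)
  have zz: "mink z z = -1" "z$3 > 0" using hyp_planeD[OF z] by auto
  have sp: "sqrt (1 + c^2) > 0" by (simp add: add_pos_nonneg)
  define w where "w = z - c *\<^sub>R n"
  have ww: "mink w w = -1 - c^2"
    using nn zz by (simp add: w_def mink_simps mink_comm[of n z] c_def power2_eq_square)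
  have zw: "mink z w = -1 - c^2"
    using nn zz by (simp add: w_def mink_simps mink_comm[of n z] c_def power2_eq_square)
  have w3: "w$3 > 0"
    apply (rule same_cone[of z])
    using zz ww zw by (auto simp: add_pos_nonneg) (smt (verit) zero_le_power2)+
  have p: "proj n z = (1 / sqrt (1 + c^2)) *\<^sub>R w" by (simp add: proj_def w_def c_def)
  have "mink (proj n z) (proj n z) = (1 / sqrt (1 + c^2))^2 * (-1 - c^2)"
    by (simp add: p mink_simps ww power2_eq_square)
  also have "\<dots> = -1" using sp by (simp add: power_divide field_simps)
  finally have h1: "mink (proj n z) (proj n z) = -1" .
  have h2: "(proj n z)$3 > 0" using w3 sp by (simp add: p)
  have h3: "mink (proj n z) n = 0" using nn by (simp add: p w_def mink_simps c_def)
  show ?thesis using h1 h2 h3 by (simp add: geod_def hyp_plane_def)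
qed

lemma proj_hdist:
  assumes z: "z \<in> hyp_plane" and n: "spacelike_unit n"
  shows "mink z (proj n z) = - sqrt (1 + (mink z n)^2)"
proof -
  define c where "c = mink z n"
  have nn: "mink n n = 1" using n by (simp add: spacelike_unit_def)
  have zz: "mink z z = -1" using hyp_planeD[OF z] by auto
  have sp: "sqrt (1 + c^2) > 0" by (simp add: add_pos_nonneg)
  have "mink z (proj n z) = (-1 - c^2) / sqrt (1 + c^2)"
    using nn zz by (simp add: proj_def mink_simps c_def mink_comm[of n z] power2_eq_square)
  also have "\<dots> = - sqrt (1 + c^2)"
    using sp by (simp add: field_simps)
  finally show ?thesis by (simp add: c_def)
qed

lemma geod_lower:
  assumes z: "z \<in> hyp_plane" and n: "spacelike_unit n" and x: "x \<in> geod n"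
  shows "- mink z x \<ge> sqrt (1 + (mink z n)^2)"
proof -
  define c where "c = mink z n"
  have nn: "mink n n = 1" using n by (simp add: spacelike_unit_def)
  have zz: "mink z z = -1" using hyp_planeD[OF z] by auto
  have xh: "x \<in> hyp_plane" and xn: "mink x n = 0" using x by (auto simp: geod_def)
  have xx: "mink x x = -1" using hyp_planeD[OF xh] by auto
  define w where "w = z - c *\<^sub>R n"
  have ww: "mink w w = -1 - c^2"
    using nn zz by (simp add: w_def mink_simps mink_comm[of n z] c_def power2_eq_square)
  have wx: "mink w x = mink z x" using xn by (simp add: w_def mink_simps mink_comm[of n x])
  have "(mink w x)^2 \<ge> mink w w * mink x x"
    by (rule rev_cs) (simp add: ww add_pos_nonneg, smt (verit) zero_le_power2)
  hence "(mink z x)^2 \<ge> 1 + c^2" using ww xx wx by simp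
  hence "sqrt (1 + c^2) \<le> sqrt ((mink z x)^2)" by (rule real_sqrt_le_mono)
  also have "\<dots> = - mink z x" using hyp_neg[OF z xh] by simp
  finally show ?thesis by (simp add: c_def)
qed

lemma arcosh_sqrt: "arcosh (sqrt (1 + c^2)) = arsinh \<bar>c\<bar>"
proof -
  have "sqrt (1 + c^2) \<ge> 1" by simp
  hence "arcosh (sqrt (1 + c^2)) = ln (sqrt (1 + c^2) + sqrt ((sqrt (1 + c^2))^2 - 1))"
    by (rule arcosh_real_def)
  also have "\<dots> = ln (sqrt (1 + c^2) + \<bar>c\<bar>)" by (simp add: add_nonneg_nonneg)
  also have "\<dots> = arsinh \<bar>c\<bar>" by (simp add: arsinh_real_def add.commute)
  finally show ?thesis .
qed

lemma arcosh_mono_le: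
  fixes x y :: real
  assumes "1 \<le> x" "x \<le> y"
  shows "arcosh x \<le> arcosh y"
proof -
  have "\<not> arcosh y < arcosh x" using assms by (subst arcosh_less_iff_real) auto
  thus ?thesis by simp
qed

lemma pt_set_dist_eq:
  assumes z: "z \<in> hyp_plane" and n: "spacelike_unit n"
  shows "pt_set_dist z (geod n) = arsinh \<bar>mink z n\<bar>"
proof -
  have "Inf (hdist z ` geod n) = arcosh (sqrt (1 + (mink z n)^2))"
  proof (rule cInf_eq_minimum)
    have "hdist z (proj n z) = arcosh (sqrt (1 + (mink z n)^2))"
      by (simp add: hdist_def proj_hdist[OF z n])
    thus "arcosh (sqrt (1 + (mink z n)^2)) \<in> hdist z ` geod n"
      using proj_in_geod[OF z n] by (rule image_eqI[OF sym])
  next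
    fix y assume "y \<in> hdist z ` geod n"
    then obtain x where x: "x \<in> geod n" "y = hdist z x" by auto
    have "sqrt (1 + (mink z n)^2) \<le> - mink z x" by (rule geod_lower[OF z n x(1)])
    moreover have "1 \<le> sqrt (1 + (mink z n)^2)" by simp
    ultimately show "arcosh (sqrt (1 + (mink z n)^2)) \<le> y"
      unfolding x(2) hdist_def by (rule arcosh_mono_le[rotated])
  qed
  thus ?thesis by (simp add: pt_set_dist_def arcosh_sqrt)
qed

lemma signed_dist_eq:
  assumes z: "z \<in> hyp_plane" and n: "spacelike_unit n"
  shows "signed_dist z n = arsinh (mink z n)"
  using pt_set_dist_eq[OF z n] by (simp add: signed_dist_def abs_if)

lemma sinh_pt_set_dist:
  assumes z: "z \<in> hyp_plane" and n: "spacelike_unit n" and "mink z n \<ge> 0"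
  shows "sinh (pt_set_dist z (geod n)) = mink z n"
  using pt_set_dist_eq[OF z n] assms(3) by simp




lemma perp_point:
  assumes n1: "spacelike_unit n1" and n2: "spacelike_unit n2" and E: "mink n1 n2 = - E" "E > 1"
  shows "\<exists>k. k^2 * (E^2 - 1) = 1 \<and> k *\<^sub>R (n2 + E *\<^sub>R n1) \<in> geod n1"
proof -
  have n11: "mink n1 n1 = 1" and n22: "mink n2 n2 = 1" using n1 n2 by (auto simp: spacelike_unit_def)
  define u where "u = n2 + E *\<^sub>R n1"
  have E2: "E^2 - 1 > 0" using less_1_mult[OF E(2) E(2)] by (simp add: power2_eq_square)
  have uu: "mink u u = 1 - E^2"
    using n11 n22 E(1) by (simp add: u_def mink_simps mink_comm[of n2 n1] power2_eq_square algebra_simps)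
  have un: "mink u n1 = 0" using n11 E(1) by (simp add: u_def mink_simps mink_comm[of n2 n1])
  have u3: "u$3 \<noteq> 0"
  proof
    assume "u$3 = 0"
    hence "mink u u = (u$1)^2 + (u$2)^2" by (simp add: mink_def power2_eq_square)
    thus False using uu E2 by (smt (verit) zero_le_power2)
  qed
  define k where "k = (if u$3 > 0 then 1 else -1) / sqrt (E^2 - 1)"
  have k2: "k^2 * (E^2 - 1) = 1" using E2 by (simp add: k_def power_divide)
  have "mink (k *\<^sub>R u) (k *\<^sub>R u) = k^2 * (1 - E^2)" by (simp add: mink_simps uu power2_eq_square)
  also have "\<dots> = -1" using k2 by (simp add: algebra_simps)
  finally have h1: "mink (k *\<^sub>R u) (k *\<^sub>R u) = -1" .
  have h2: "(k *\<^sub>R u)$3 > 0" using u3 E2 by (simp add: k_def zero_less_mult_iff mult_less_0_iff)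
  have h3: "mink (k *\<^sub>R u) n1 = 0" by (simp add: mink_simps un)
  show ?thesis using k2 h1 h2 h3 by (auto simp: geod_def hyp_plane_def u_def)
qed

lemma set_dist_eq:
  assumes n1: "spacelike_unit n1" and n2: "spacelike_unit n2" and E: "mink n1 n2 < -1"
  shows "cosh (set_dist (geod n1) (geod n2)) = - mink n1 n2"
proof -
  define E where "E = - mink n1 n2"
  have E1: "E > 1" using E by (simp add: E_def)
  have E2: "1 < E^2" using less_1_mult[OF E1 E1] by (simp add: power2_eq_square)
  have n11: "mink n1 n1 = 1" and n22: "mink n2 n2 = 1" using n1 n2 by (auto simp: spacelike_unit_def)
  have lower: "- mink x y \<ge> E" if x: "x \<in> geod n1" and y: "y \<in> geod n2" for x y
  proof -
    have yh: "y \<in> hyp_plane" and yn: "mink y n2 = 0" using y by (auto simp: geod_def)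
    have yy: "mink y y = -1" using hyp_planeD[OF yh] by simp
    have "- mink y x \<ge> sqrt (1 + (mink y n1)^2)" by (rule geod_lower[OF yh n1 x])
    define w where "w = n1 + E *\<^sub>R n2"
    have ww: "mink w w = 1 - E^2"
      using n11 n22 by (simp add: w_def mink_simps mink_comm[of n2 n1] E_def power2_eq_square algebra_simps)
    have wy: "mink w y = mink n1 y" using yn by (simp add: w_def mink_simps mink_comm[of n2 y])
    have "(mink w y)^2 \<ge> mink w w * mink y y"
      by (rule rev_cs) (simp add: ww E2)
    hence "(mink y n1)^2 \<ge> E^2 - 1" using ww yy wy by (simp add: mink_comm[of n1 y])
    hence "sqrt (1 + (mink y n1)^2) \<ge> sqrt (E^2)" by (intro real_sqrt_le_mono) simp
    hence "sqrt (1 + (mink y n1)^2) \<ge> E" using E1 by simp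
    thus ?thesis using \<open>- mink y x \<ge> _\<close> by (simp add: mink_comm[of y x])
  qed
  obtain k1 where k1: "k1^2 * (E^2 - 1) = 1" "k1 *\<^sub>R (n2 + E *\<^sub>R n1) \<in> geod n1"
    using perp_point[OF n1 n2 _ E1] by (auto simp: E_def)
  obtain k2 where k2: "k2^2 * (E^2 - 1) = 1" "k2 *\<^sub>R (n1 + E *\<^sub>R n2) \<in> geod n2"
    using perp_point[OF n2 n1 _ E1] by (auto simp: E_def mink_comm)
  define x where "x = k1 *\<^sub>R (n2 + E *\<^sub>R n1)"
  define y where "y = k2 *\<^sub>R (n1 + E *\<^sub>R n2)"
  have xg: "x \<in> geod n1" and yg: "y \<in> geod n2" using k1 k2 by (auto simp: x_def y_def)
  have xy: "mink x y = k1 * k2 * E * (1 - E^2)"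
    using n11 n22 by (simp add: x_def y_def mink_simps mink_comm[of n2 n1] E_def power2_eq_square algebra_simps)
  have neg: "mink x y < 0" using xg yg hyp_neg by (auto simp: geod_def)
  have "(mink x y)^2 = (k1^2 * (E^2 - 1)) * (k2^2 * (E^2 - 1)) * E^2"
    unfolding xy by algebra
  hence "(mink x y)^2 = E^2" using k1(1) k2(1) by simp
  hence xyE: "- mink x y = E" using neg E1 power2_eq_iff[of "mink x y" E] by auto
  have "set_dist (geod n1) (geod n2) = arcosh E"
    unfolding set_dist_def
  proof (rule cInf_eq_minimum)
    show "arcosh E \<in> {hdist x y |x y. x \<in> geod n1 \<and> y \<in> geod n2}"
    proof -
      have "arcosh E = hdist x y" by (simp add: hdist_def xyE)
      thus ?thesis using xg yg by blast
    qed
  next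
    fix v assume "v \<in> {hdist x y |x y. x \<in> geod n1 \<and> y \<in> geod n2}"
    then obtain x y where "x \<in> geod n1" "y \<in> geod n2" "v = hdist x y" by auto
    moreover have "E \<le> - mink x y" using lower \<open>x \<in> geod n1\<close> \<open>y \<in> geod n2\<close> by blast
    ultimately show "arcosh E \<le> v" unfolding hdist_def using E1
      by (simp add: arcosh_mono_le)
  qed
  thus ?thesis using E1 by (simp add: E_def)
qed




definition det3 :: "real^3 \<Rightarrow> real^3 \<Rightarrow> real^3 \<Rightarrow> real" where
  "det3 x y z = x$1*(y$2*z$3 - y$3*z$2) - x$2*(y$1*z$3 - y$3*z$1) + x$3*(y$1*z$2 - y$2*z$1)"

lemma gram_det:
  "(det3 x y z)^2 = - (mink x x * (mink y y * mink z z - (mink y z)^2)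
     - mink x y * (mink x y * mink z z - mink y z * mink x z)
     + mink x z * (mink x y * mink y z - mink y y * mink x z))"
  unfolding det3_def mink_def by algebra

lemma decomp:
  assumes "det3 x y z \<noteq> 0"
  shows "\<exists>A B C. v = A *\<^sub>R x + B *\<^sub>R y + C *\<^sub>R z"
proof (intro exI)
  let ?D = "det3 x y z"
  show "v = (det3 y z v / ?D) *\<^sub>R x + (- det3 x z v / ?D) *\<^sub>R y + (det3 x y v / ?D) *\<^sub>R z"
  proof (subst vec_eq_iff, rule allI)
    fix i :: 3
    have "\<forall>j::3. v$j * ?D = det3 y z v * x$j - det3 x z v * y$j + det3 x y v * z$j"
      unfolding forall_3 det3_def by (intro conjI; algebra)
    hence "v$i * ?D = det3 y z v * x$i - det3 x z v * y$i + det3 x y v * z$i" by blast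
    thus "v$i = ((det3 y z v / ?D) *\<^sub>R x + (- det3 x z v / ?D) *\<^sub>R y + (det3 x y v / ?D) *\<^sub>R z)$i"
    proof -
      have "v$i = (det3 y z v * x$i - det3 x z v * y$i + det3 x y v * z$i) / ?D"
        using \<open>v$i * ?D = _\<close> assms by (simp add: eq_divide_eq)
      thus ?thesis by (simp add: add_divide_distrib diff_divide_distrib algebra_simps)
    qed
  qed
qed




lemma face:
  fixes ni nj nk m z :: "real^3" and ri rj rk t :: real
  assumes tri: "truncated_triangle ni nj nk"
    and mu: "spacelike_unit m" and mp: "mink m ni = 0" "mink m nj = 0"
    and side: "geod nk \<subseteq> half_plane m"
    and z: "z \<in> hyp_plane" and r: "ri > 0" "rj > 0" "rk > 0"
    and t: "t \<ge> 0" "ri * mink z ni = t" "rj * mink z nj = t" "rk * mink z nk = t"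
  shows "t > 0 \<and>
    t^2 * ((1/ri^2 + 2*(- mink ni nj)/(ri*rj) + 1/rj^2)/((- mink ni nj)^2-1)) = 1 + (mink z m)^2 \<and>
    Delta (- mink nk ni) (- mink nj nk) (- mink ni nj) > 0 \<and>
    mink z m / t = - (1/rk - (((- mink nk ni)+(- mink ni nj)*(- mink nj nk))/((- mink ni nj)^2-1))/ri
       - (((- mink ni nj)*(- mink nk ni)+(- mink nj nk))/((- mink ni nj)^2-1))/rj)
       * sqrt((- mink ni nj)^2-1) / sqrt (Delta (- mink nk ni) (- mink nj nk) (- mink ni nj))"
proof -
  define e where "e = - mink ni nj"
  define a where "a = - mink nk ni"
  define d where "d = - mink nj nk"
  have ui: "mink ni ni = 1" and uj: "mink nj nj = 1" and uk: "mink nk nk = 1"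
    and mm: "mink m m = 1"
    using tri mu by (auto simp: truncated_triangle_def spacelike_unit_def)
  have e1: "e > 1" and a1: "a > 1" and d1: "d > 1"
    using tri by (auto simp: truncated_triangle_def e_def a_def d_def mink_comm[of nk ni])
  obtain z0 where z0: "z0 \<in> half_plane ni" "z0 \<in> half_plane nj" "z0 \<in> half_plane nk"
    using tri by (auto simp: truncated_triangle_def)
  have E2: "e^2 - 1 > 0" using less_1_mult[OF e1 e1] by (simp add: power2_eq_square)
  have "(det3 ni nj m)^2 = e^2 - 1"
    unfolding gram_det using ui uj mm mp
    by (simp add: mink_comm[of ni m] mink_comm[of nj m] e_def power2_eq_square)
  hence D0: "det3 ni nj m \<noteq> 0" using E2 by auto
  obtain \<alpha> \<beta> \<gamma> where nk: "nk = \<alpha> *\<^sub>R ni + \<beta> *\<^sub>R nj + \<gamma> *\<^sub>R m"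
    using decomp[OF D0] by blast
  have mji: "mink nj ni = -e" by (simp add: e_def mink_comm)
  have mim: "mink ni m = 0" "mink nj m = 0" using mp by (simp_all add: mink_comm)
  have k1: "\<alpha> - e * \<beta> = -a"
    using ui mji mp by (simp add: a_def nk mink_simps e_def)
  have k2: "- e * \<alpha> + \<beta> = -d"
    using uj mji mp mim by (simp add: d_def mink_comm[of nj nk] nk mink_simps e_def mink_comm[of nj ni])
  have k3: "mink nk m = \<gamma>" using mim mm by (simp add: nk mink_simps)
  have k4: "1 = \<alpha> * (-a) + \<beta> * (-d) + \<gamma> * \<gamma>"
  proof -
    have "mink nk nk = \<alpha> * mink ni nk + \<beta> * mink nj nk + \<gamma> * mink m nk"
      by (subst (1) nk) (simp add: mink_simps)
    thus ?thesis using uk k3 by (simp add: a_def d_def mink_comm[of ni nk] mink_comm[of m nk])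
  qed
  have alE: "\<alpha> * (e^2 - 1) = a + e*d" using k1 k2 by algebra
  hence al: "\<alpha> = (a + e*d)/(e^2-1)" using E2 by (simp add: eq_divide_eq)
  have beE: "\<beta> * (e^2 - 1) = e*a + d" using k1 k2 by algebra
  hence be: "\<beta> = (e*a + d)/(e^2-1)" using E2 by (simp add: eq_divide_eq)
  have alpos: "\<alpha> > 0" "\<beta> > 0" unfolding al be using E2 e1 a1 d1
    by (auto intro!: divide_pos_pos add_pos_pos mult_pos_pos)
  have gneg: "\<gamma> < 0"
  proof -
    have z0h: "z0 \<in> hyp_plane" using z0 by (auto simp: half_plane_def)
    define z2 where "z2 = proj m z0"
    have z2g: "z2 \<in> geod m" using proj_in_geod[OF z0h mu] by (simp add: z2_def)
    have z2h: "z2 \<in> hyp_plane" and z2m: "mink z2 m = 0" using z2g by (auto simp: geod_def)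
    have sp: "sqrt (1 + (mink z0 m)^2) > 0" by (simp add: add_pos_nonneg)
    have "mink z2 ni = mink z0 ni / sqrt (1 + (mink z0 m)^2)"
      using proj_mink[OF mu, of z0 ni] mp by (simp add: z2_def)
    hence p1: "mink z2 ni > 0" using z0 sp by (simp add: half_plane_def)
    have "mink z2 nj = mink z0 nj / sqrt (1 + (mink z0 m)^2)"
      using proj_mink[OF mu, of z0 nj] mp by (simp add: z2_def)
    hence p2: "mink z2 nj > 0" using z0 sp by (simp add: half_plane_def)
    have "mink z2 nk = \<alpha> * mink z2 ni + \<beta> * mink z2 nj"
      using z2m by (subst nk) (simp add: mink_simps)
    hence p3: "mink z2 nk > 0" using p1 p2 alpos by (simp add: add_pos_pos)
    have uk': "spacelike_unit nk" using uk by (simp add: spacelike_unit_def)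
    define y where "y = proj nk z2"
    have "y \<in> geod nk" using proj_in_geod[OF z2h uk'] by (simp add: y_def)
    hence "mink y m > 0" using side by (auto simp: half_plane_def)
    moreover have "mink y m = (0 - mink z2 nk * \<gamma>) / sqrt (1 + (mink z2 nk)^2)"
      using proj_mink[OF uk', of z2 m] z2m k3 by (simp add: y_def)
    moreover have "sqrt (1 + (mink z2 nk)^2) > 0" by (simp add: add_pos_nonneg)
    ultimately have "mink z2 nk * \<gamma> / sqrt (1 + (mink z2 nk)^2) < 0" by simp
    hence "- (mink z2 nk * \<gamma>) > 0" using \<open>sqrt (1 + (mink z2 nk)^2) > 0\<close>
      by (simp add: divide_less_0_iff)
    thus ?thesis using p3 by (simp add: mult_less_0_iff)
  qed
  obtain A B C where zd: "z = A *\<^sub>R ni + B *\<^sub>R nj + C *\<^sub>R m"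
    using decomp[OF D0] by blast
  have zm: "mink z m = C" using mim mm by (simp add: zd mink_simps)
  have zi: "mink z ni = A - e * B" using ui mji mp by (simp add: zd mink_simps)
  have zj: "mink z nj = - e * A + B" using uj mji mp mim by (simp add: zd mink_simps e_def mink_comm[of nj ni])
  have zz: "-1 = A * mink z ni + B * mink z nj + C * C"
  proof -
    have "mink z z = A * mink ni z + B * mink nj z + C * mink m z"
      by (subst (1) zd) (simp add: mink_simps)
    thus ?thesis using hyp_planeD[OF z] zm by (simp add: mink_comm[of ni z] mink_comm[of nj z] mink_comm[of m z])
  qed
  have zk: "mink z nk = \<alpha> * mink z ni + \<beta> * mink z nj + \<gamma> * C"
    using zm by (subst nk) (simp add: mink_simps)
  define xi where "xi = mink z ni"
  define xj where "xj = mink z nj"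
  have Q: "xi^2 + 2*e*xi*xj + xj^2 = (e^2-1) * (1 + C^2)"
    using zi zj zz unfolding xi_def xj_def by algebra
  have xit: "xi = t / ri" "xj = t / rj" "mink z nk = t / rk"
    using t r by (simp_all add: xi_def xj_def eq_divide_eq mult.commute)
  have tpos: "t > 0"
  proof (rule ccontr)
    assume "\<not> t > 0"
    hence "t = 0" using t(1) by simp
    hence "(e^2-1) * (1 + C^2) = 0" using Q xit by simp
    thus False using E2 by (simp add: add_pos_nonneg) (smt (verit) zero_le_power2)
  qed
  have Q2: "t^2 * ((1/ri^2 + 2*e/(ri*rj) + 1/rj^2)/(e^2-1)) = 1 + C^2"
  proof -
    have "t^2 * (1/ri^2 + 2*e/(ri*rj) + 1/rj^2) = xi^2 + 2*e*xi*xj + xj^2"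
      unfolding xit by (simp add: power_divide field_simps power2_eq_square)
    thus ?thesis using Q E2 by (simp add: field_simps)
  qed
  have gC: "\<gamma> * C = t * (1/rk - \<alpha>/ri - \<beta>/rj)"
    using zk xit unfolding xi_def xj_def by (simp add: field_simps)
  have g2: "\<gamma>^2 * (e^2 - 1) = Delta a d e"
  proof -
    have "\<gamma>^2 = 1 + \<alpha> * a + \<beta> * d" using k4 by (simp add: power2_eq_square)
    hence "\<gamma>^2 * (e^2 - 1) = (e^2-1) + (\<alpha> * (e^2-1)) * a + (\<beta> * (e^2-1)) * d"
      by (simp add: algebra_simps)
    also have "\<dots> = Delta a d e" unfolding alE beE Delta_def
      by (simp add: power2_eq_square algebra_simps)
    finally show ?thesis .
  qed
  have Dpos: "Delta a d e > 0" using g2[symmetric] gneg E2 by simp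
  have sqD: "sqrt (Delta a d e) = - \<gamma> * sqrt (e^2 - 1)"
    unfolding g2[symmetric] using gneg by (simp add: real_sqrt_mult)
  have fin: "C / t = - (1/rk - \<alpha>/ri - \<beta>/rj) * sqrt (e^2-1) / sqrt (Delta a d e)"
  proof -
    have "C / t = (1/rk - \<alpha>/ri - \<beta>/rj) / \<gamma>" using gC tpos gneg
      by (simp add: field_simps)
    also have "\<dots> = - (1/rk - \<alpha>/ri - \<beta>/rj) * sqrt (e^2-1) / sqrt (Delta a d e)"
      unfolding sqD using E2 gneg by (simp add: field_simps)
    finally show ?thesis .
  qed
  show ?thesis
    unfolding e_def[symmetric] a_def[symmetric] d_def[symmetric]
    using tpos Q2 Dpos fin zm al be by simp
qed


lemma alg1:
  fixes a b c d e Uk Ul f :: real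
  assumes "Uk^2 = Delta a d e" "Ul^2 = Delta b c e" "e^2 - 1 \<noteq> 0"
   "f = (a*b + c*d + a*c*e + b*d*e + Uk * Ul) / (e^2 - 1)"
  shows "Delta c d f * (e^2-1)^2 = ((a+e*d)*Ul + (b+e*c)*Uk)^2"
proof -
  have hf: "f * (e^2-1) = a*b + c*d + a*c*e + b*d*e + Uk * Ul" using assms(3,4) by simp
  show ?thesis using assms(1,2) hf unfolding Delta_def by algebra
qed
lemma alg2:
  fixes a b c d e Uk Ul f :: real
  assumes "Uk^2 = Delta a d e" "Ul^2 = Delta b c e" "e^2 - 1 \<noteq> 0"
   "f = (a*b + c*d + a*c*e + b*d*e + Uk * Ul) / (e^2 - 1)"
  shows "Delta a b f * (e^2-1)^2 = ((e*a+d)*Ul + (e*b+c)*Uk)^2"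
proof -
  have hf: "f * (e^2-1) = a*b + c*d + a*c*e + b*d*e + Uk * Ul" using assms(3,4) by simp
  show ?thesis using assms(1,2) hf unfolding Delta_def by algebra
qed



lemma zero_le_mult_iff_pos: "(K::real) > 0 \<Longrightarrow> 0 \<le> K * w \<longleftrightarrow> 0 \<le> w"
  by (simp add: zero_le_mult_iff)

lemma key_sign:
  fixes t s q mu nu :: real
  assumes "t > 0" "s > 0" "t^2 * q = 1 + mu^2" "s^2 * q = 1 + nu^2"
  shows "arsinh mu + arsinh nu \<ge> 0 \<longleftrightarrow> mu / t + nu / s \<ge> 0"
proof -
  have q: "q > 0"
  proof -
    have "t^2 * q > 0" using assms(3) by (smt (verit) zero_le_power2)
    thus ?thesis using assms(1) by (simp add: zero_less_mult_iff)
  qed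
  have c1: "sqrt (mu^2 + 1) = t * sqrt q"
    using assms(1,3) q by (simp add: real_sqrt_mult add.commute[of "mu^2"] flip: assms(3))
  have c2: "sqrt (nu^2 + 1) = s * sqrt q"
    using assms(2,4) q by (simp add: real_sqrt_mult add.commute[of "nu^2"] flip: assms(4))
  have "arsinh mu + arsinh nu \<ge> 0 \<longleftrightarrow> sinh (arsinh mu + arsinh nu) \<ge> 0" by simp
  also have "sinh (arsinh mu + arsinh nu) = mu * sqrt (nu^2 + 1) + sqrt (mu^2 + 1) * nu"
    by (simp add: sinh_add cosh_arsinh_real)
  also have "\<dots> = (sqrt q * t * s) * (mu / t + nu / s)"
    unfolding c1 c2 using assms(1,2) by (simp add: field_simps)
  also have "0 \<le> (sqrt q * t * s) * (mu / t + nu / s) \<longleftrightarrow> 0 \<le> mu / t + nu / s"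
    using q assms(1,2) by (intro zero_le_mult_iff_pos) simp
  finally show ?thesis .
qed

lemma sqrt_sq_div:
  fixes X Y :: real
  assumes "Y > 0" "X \<ge> 0" "D * Y^2 = X^2"
  shows "sqrt D = X / Y"
proof -
  have "D = (X / Y)^2" using assms by (simp add: power_divide eq_divide_eq)
  thus ?thesis using assms by simp
qed




lemma final_alg:
  fixes a b c d e E S Uk Ul ri rj rk rl :: real
  assumes "E \<noteq> 0" "Uk \<noteq> 0" "Ul \<noteq> 0" "ri \<noteq> 0" "rj \<noteq> 0" "rk \<noteq> 0" "rl \<noteq> 0"
  shows "- (1/rk - ((a+e*d)/E)/ri - ((e*a+d)/E)/rj) * S / Uk
       + - (1/rl - ((b+e*c)/E)/ri - ((e*b+c)/E)/rj) * S / Ul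
     = - (S / (Uk * Ul)) * (Ul / rk + Uk / rl - ((((a+e*d)*Ul + (b+e*c)*Uk) / E) / ri
          + (((e*a+d)*Ul + (e*b+c)*Uk) / E) / rj))"
  using assms by (simp add: field_simps)
lemma neg_mult_nonneg_iff: "(K::real) > 0 \<Longrightarrow> 0 \<le> - K * w \<longleftrightarrow> w \<le> 0"
  by (simp add: mult_le_0_iff)

theorem lemma4p9:
  fixes ni nj nk nl m Ok Ol :: "real^3"
    and ri rj rk rl :: real
  assumes tri_k: "truncated_triangle ni nj nk"
    and tri_l: "truncated_triangle ni nj nl"
    and m_unit: "spacelike_unit m"
    and m_perp: "mink m ni = 0" "mink m nj = 0"
    and k_side: "geod nk \<subseteq> half_plane m"
    and l_side: "geod nl \<subseteq> half_plane (- m)"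
    and weights: "ri > 0" "rj > 0" "rk > 0" "rl > 0"
    and Ok: "is_face_centre ni nj nk ri rj rk Ok"
    and Ol: "is_face_centre ni nj nl ri rj rl Ol"
  shows
    "(let p = rk; q = ri; r = rl; s = rj;
          a = cosh (set_dist (geod nk) (geod ni));
          b = cosh (set_dist (geod ni) (geod nl));
          c = cosh (set_dist (geod nl) (geod nj));
          d = cosh (set_dist (geod nj) (geod nk));
          e = cosh (set_dist (geod ni) (geod nj));
          f = (a*b + c*d + a*c*e + b*d*e + sqrt (Delta a d e) * sqrt (Delta b c e)) / (e^2 - 1)
      in signed_dist Ok m + signed_dist Ol (- m) \<ge> 0 \<longleftrightarrow>
         sqrt (Delta b c e) / p + sqrt (Delta a d e) / r
           \<le> sqrt (Delta c d f) / q + sqrt (Delta a b f) / s)"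
proof -
  have ui: "spacelike_unit ni" and uj: "spacelike_unit nj" and uk: "spacelike_unit nk"
    and ul: "spacelike_unit nl"
    using tri_k tri_l by (auto simp: truncated_triangle_def)
  have um': "spacelike_unit (- m)" using m_unit by (simp add: spacelike_unit_def mink_simps)
  define a where "a = - mink nk ni"
  define b where "b = - mink nl ni"
  define c where "c = - mink nj nl"
  define d where "d = - mink nj nk"
  define e where "e = - mink ni nj"
  have ha: "cosh (set_dist (geod nk) (geod ni)) = a"
    using set_dist_eq[OF uk ui] tri_k by (simp add: a_def truncated_triangle_def mink_comm[of nk ni])
  have hb: "cosh (set_dist (geod ni) (geod nl)) = b"
    using set_dist_eq[OF ui ul] tri_l by (simp add: b_def truncated_triangle_def mink_comm[of nl ni])
  have hc: "cosh (set_dist (geod nl) (geod nj)) = c"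
    using set_dist_eq[OF ul uj] tri_l by (simp add: c_def truncated_triangle_def mink_comm[of nl nj])
  have hd: "cosh (set_dist (geod nj) (geod nk)) = d"
    using set_dist_eq[OF uj uk] tri_k by (simp add: d_def truncated_triangle_def)
  have he: "cosh (set_dist (geod ni) (geod nj)) = e"
    using set_dist_eq[OF ui uj] tri_k by (simp add: e_def truncated_triangle_def)
  have e1: "e > 1" and a1: "a > 1" and b1: "b > 1" and c1: "c > 1" and d1: "d > 1"
    using tri_k tri_l by (auto simp: truncated_triangle_def a_def b_def c_def d_def e_def
        mink_comm[of nk ni] mink_comm[of nl ni])
  have E2: "e^2 - 1 > 0" using less_1_mult[OF e1 e1] by (simp add: power2_eq_square)
  have Okh: "Ok \<in> hyp_plane" and Ok0: "mink Ok ni \<ge> 0" "mink Ok nj \<ge> 0" "mink Ok nk \<ge> 0"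
    using Ok by (auto simp: is_face_centre_def)
  define t where "t = ri * mink Ok ni"
  have tk: "ri * mink Ok ni = t" "rj * mink Ok nj = t" "rk * mink Ok nk = t" "t \<ge> 0"
    using Ok Ok0 weights
    by (auto simp: t_def is_face_centre_def sinh_pt_set_dist[OF Okh ui] sinh_pt_set_dist[OF Okh uj]
        sinh_pt_set_dist[OF Okh uk])
  note FK = face[OF tri_k m_unit m_perp k_side Okh weights(1,2,3) tk(4) tk(1,2,3)]
  have Olh: "Ol \<in> hyp_plane" and Ol0: "mink Ol ni \<ge> 0" "mink Ol nj \<ge> 0" "mink Ol nl \<ge> 0"
    using Ol by (auto simp: is_face_centre_def)
  define s where "s = ri * mink Ol ni"
  have sl: "ri * mink Ol ni = s" "rj * mink Ol nj = s" "rl * mink Ol nl = s" "s \<ge> 0"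
    using Ol Ol0 weights
    by (auto simp: s_def is_face_centre_def sinh_pt_set_dist[OF Olh ui] sinh_pt_set_dist[OF Olh uj]
        sinh_pt_set_dist[OF Olh ul])
  have mp': "mink (- m) ni = 0" "mink (- m) nj = 0" using m_perp by (simp_all add: mink_simps)
  note FL = face[OF tri_l um' mp' l_side Olh weights(1,2,4) sl(4) sl(1,2,3)]
  define q where "q = (1/ri^2 + 2*e/(ri*rj) + 1/rj^2)/(e^2-1)"
  define mu where "mu = mink Ok m"
  define nu where "nu = mink Ol (- m)"
  define Uk where "Uk = sqrt (Delta a d e)"
  define Ul where "Ul = sqrt (Delta b c e)"
  define S where "S = sqrt (e^2 - 1)"
  have tpos: "t > 0" and Qk: "t^2 * q = 1 + mu^2" and Dk: "Delta a d e > 0"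
    and fk: "mu / t = - (1/rk - ((a+e*d)/(e^2-1))/ri - ((e*a+d)/(e^2-1))/rj) * S / Uk"
    using FK by (simp_all add: a_def d_def e_def q_def mu_def Uk_def S_def)
  have spos: "s > 0" and Ql: "s^2 * q = 1 + nu^2" and Dl: "Delta b c e > 0"
    and fl: "nu / s = - (1/rl - ((b+e*c)/(e^2-1))/ri - ((e*b+c)/(e^2-1))/rj) * S / Ul"
    using FL by (simp_all add: b_def c_def e_def q_def nu_def Ul_def S_def)
  have sdk: "signed_dist Ok m = arsinh mu" by (simp add: signed_dist_eq[OF Okh m_unit] mu_def)
  have sdl: "signed_dist Ol (- m) = arsinh nu" by (simp add: signed_dist_eq[OF Olh um'] nu_def)
  have Ukp: "Uk > 0" and Ulp: "Ul > 0" and Sp: "S > 0" using Dk Dl E2 by (simp_all add: Uk_def Ul_def S_def)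
  define f where "f = (a*b + c*d + a*c*e + b*d*e + Uk * Ul) / (e^2 - 1)"
  have Uk2: "Uk^2 = Delta a d e" and Ul2: "Ul^2 = Delta b c e" using Dk Dl by (simp_all add: Uk_def Ul_def)
  have sq1: "sqrt (Delta c d f) = ((a+e*d)*Ul + (b+e*c)*Uk) / (e^2-1)"
    apply (rule sqrt_sq_div[OF E2])
    using a1 b1 c1 d1 e1 Ukp Ulp apply (simp add: add_nonneg_nonneg)
    using alg1[OF Uk2 Ul2 _ f_def] E2 by simp
  have sq2: "sqrt (Delta a b f) = ((e*a+d)*Ul + (e*b+c)*Uk) / (e^2-1)"
    apply (rule sqrt_sq_div[OF E2])
    using a1 b1 c1 d1 e1 Ukp Ulp apply (simp add: add_nonneg_nonneg)
    using alg2[OF Uk2 Ul2 _ f_def] E2 by simp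
  have main: "arsinh mu + arsinh nu \<ge> 0 \<longleftrightarrow>
      Ul / rk + Uk / rl \<le> sqrt (Delta c d f) / ri + sqrt (Delta a b f) / rj"
  proof -
    have "arsinh mu + arsinh nu \<ge> 0 \<longleftrightarrow> mu / t + nu / s \<ge> 0"
      by (rule key_sign[OF tpos spos Qk Ql])
    also have "mu / t + nu / s = - (S / (Uk * Ul)) *
        (Ul / rk + Uk / rl - (sqrt (Delta c d f) / ri + sqrt (Delta a b f) / rj))"
      unfolding fk fl sq1 sq2 using Ukp Ulp E2 weights
      by (intro final_alg) auto
    also have "0 \<le> - (S / (Uk * Ul)) * (Ul / rk + Uk / rl - (sqrt (Delta c d f) / ri + sqrt (Delta a b f) / rj))
       \<longleftrightarrow> Ul / rk + Uk / rl - (sqrt (Delta c d f) / ri + sqrt (Delta a b f) / rj) \<le> 0"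
      using Sp Ukp Ulp by (intro neg_mult_nonneg_iff) simp
    finally show ?thesis by simp
  qed
  show ?thesis
    unfolding Let_def ha hb hc hd he sdk sdl
    using main by (simp add: f_def Uk_def Ul_def)
qed


end
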